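(* Let $G$ be a connected graph on $n$ vertices and let $k$ be an integer with $2\le k\le \operatorname{diam}(G)$. Then \[ b(G^k)\le \left\lceil \sqrt{\frac{4(k-1)}{k^2}\,n}\;\right\rceil. \]
   Context: Graphs are finite, simple, undirected. $G^k$ is the graph on $V(G)$ in which distinct $u,v$ are adjacent iff $d_G(u,v)\le k$. Graph burning: in each round $i$ a vertex (source) is chosen and burned, and simultaneously every unburned neighbour of a vertex burned by the end of round $i-1$ becomes burned; burned vertices stay burned. The burning number $b(G)$ is the minimum number of rounds needed to burn all vertices. *)

theory Defs
  imports Complex_Main
begin

definition simple_graph :: "'a set \<Rightarrow> ('a \<Rightarrow> 'a \<Rightarrow> bool) \<Rightarrow> bool" where
  "simple_graph V E \<longleftrightarrow> finite V \<and> (\<forall>u v. E u v \<longrightarrow> u \<in> V \<and> v \<in> V)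
     \<and> (\<forall>u v. E u v \<longrightarrow> E v u) \<and> (\<forall>u. \<not> E u u)"

definition edge_rel :: "('a \<Rightarrow> 'a \<Rightarrow> bool) \<Rightarrow> ('a \<times> 'a) set" where
  "edge_rel E = {(u, v). E u v}"

definition connected_graph :: "'a set \<Rightarrow> ('a \<Rightarrow> 'a \<Rightarrow> bool) \<Rightarrow> bool" where
  "connected_graph V E \<longleftrightarrow> (\<forall>u\<in>V. \<forall>v\<in>V. (u, v) \<in> (edge_rel E)\<^sup>*)"

definition gdist :: "('a \<Rightarrow> 'a \<Rightarrow> bool) \<Rightarrow> 'a \<Rightarrow> 'a \<Rightarrow> nat" where
  "gdist E u v = (LEAST d. (u, v) \<in> edge_rel E ^^ d)"

definition diam :: "'a set \<Rightarrow> ('a \<Rightarrow> 'a \<Rightarrow> bool) \<Rightarrow> nat" where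
  "diam V E = Max {gdist E u v | u v. u \<in> V \<and> v \<in> V}"

definition graph_power :: "'a set \<Rightarrow> ('a \<Rightarrow> 'a \<Rightarrow> bool) \<Rightarrow> nat \<Rightarrow> 'a \<Rightarrow> 'a \<Rightarrow> bool" where
  "graph_power V E k u v \<longleftrightarrow> u \<in> V \<and> v \<in> V \<and> u \<noteq> v \<and> gdist E u v \<le> k"

text \<open>Burning process: xs ! i is the source chosen in round i+1.
  burned V E xs i is the set of vertices burned by the end of round i.\<close>
fun burned :: "'a set \<Rightarrow> ('a \<Rightarrow> 'a \<Rightarrow> bool) \<Rightarrow> 'a list \<Rightarrow> nat \<Rightarrow> 'a set" where
  "burned V E xs 0 = {}"
| "burned V E xs (Suc i) =
     burned V E xs i \<union> {v \<in> V. \<exists>u \<in> burned V E xs i. E u v} \<union> {xs ! i}"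

definition burns_in :: "'a set \<Rightarrow> ('a \<Rightarrow> 'a \<Rightarrow> bool) \<Rightarrow> nat \<Rightarrow> bool" where
  "burns_in V E m \<longleftrightarrow> (\<exists>xs. length xs = m \<and> set xs \<subseteq> V \<and> V \<subseteq> burned V E xs m)"

definition burning_number :: "'a set \<Rightarrow> ('a \<Rightarrow> 'a \<Rightarrow> bool) \<Rightarrow> nat" where
  "burning_number V E = (LEAST m. burns_in V E m)"

end

theory Submission
  imports Defs
begin

lemma arith_main:
  fixes k n m :: nat
  assumes k2: "2 \<le> k" and nk: "k + 1 \<le> n"
    and mX: "sqrt (4 * (real k - 1) / (real k)\<^sup>2 * real n) \<le> real m"
  shows "2 * n + k * m \<le> k * m * m + 2 * m"
proof -
  define K where "K = real k"
  define M where "M = real m"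
  define N where "N = real n"
  have K2: "K \<ge> 2" using k2 K_def by simp
  have NK: "N \<ge> K + 1" using nk K_def N_def by simp
  have X0: "0 \<le> 4 * (K - 1) / K\<^sup>2 * N"
  proof -
    have a: "0 \<le> 4 * (K - 1)" using K2 by simp
    have b: "0 \<le> K\<^sup>2" by simp
    have c: "0 \<le> N" using NK K2 by simp
    show ?thesis by (rule mult_nonneg_nonneg[OF divide_nonneg_nonneg[OF a b] c])
  qed
  have "4 * (K - 1) / K\<^sup>2 * N \<le> M\<^sup>2"
  proof -
    have "sqrt (4 * (K - 1) / K\<^sup>2 * N) \<le> M" using mX K_def M_def N_def by simp
    moreover have "0 \<le> sqrt (4 * (K - 1) / K\<^sup>2 * N)" using X0 by (rule real_sqrt_ge_zero)
    ultimately have "(sqrt (4 * (K - 1) / K\<^sup>2 * N))\<^sup>2 \<le> M\<^sup>2" by (rule power_mono)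
    then show ?thesis using real_sqrt_pow2[OF X0] by simp
  qed
  then have A: "4 * (K - 1) * N \<le> K\<^sup>2 * M\<^sup>2" using K2 by (simp add: field_simps)
  have M2: "M \<ge> 2"
  proof (rule ccontr)
    assume "\<not> M \<ge> 2"
    then have "m \<le> 1" using M_def by simp
    then have "M\<^sup>2 \<le> 1" using M_def by (cases m) auto
    then have "K\<^sup>2 * M\<^sup>2 \<le> K\<^sup>2" by (simp add: mult_left_le)
    moreover have "4 * (K - 1) * (K + 1) \<le> 4 * (K - 1) * N" using NK K2 by simp
    ultimately have "4 * (K - 1) * (K + 1) \<le> K\<^sup>2" using A by linarith
    then have "3 * K\<^sup>2 \<le> 4" by (simp add: algebra_simps power2_eq_square)
    moreover have "K\<^sup>2 \<ge> 4" using K2 power_mono[of 2 K 2] by simp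
    ultimately show False by simp
  qed
  have P: "0 \<le> 2 * M * ((K - 2) * (K * M - 2 * K + 2))"
  proof -
    have "0 \<le> K - 2" using K2 by simp
    moreover have "0 \<le> K * M - 2 * K + 2"
    proof -
      have "K * 2 \<le> K * M" using M2 K2 by simp
      then show ?thesis by simp
    qed
    ultimately show ?thesis using M2 by simp
  qed
  have B: "2 * K\<^sup>2 * M\<^sup>2 \<le> 4 * (K - 1) * (K * M * M - K * M + 2 * M)"
    using P by (simp add: algebra_simps power2_eq_square)
  have "4 * (K - 1) * (2 * N) \<le> 4 * (K - 1) * (K * M * M - K * M + 2 * M)" using A B by simp
  then have "2 * N \<le> K * M * M - K * M + 2 * M" using K2 by simp
  then have "real (2 * n + k * m) \<le> real (k * m * m + 2 * m)" using K_def M_def N_def by simp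
  then show ?thesis by linarith
qed


locale bgraph =
  fixes V :: "'a set" and E :: "'a \<Rightarrow> 'a \<Rightarrow> bool"
  assumes sg: "simple_graph V E" and cg: "connected_graph V E"
begin

lemma finV: "finite V" using sg unfolding simple_graph_def by blast
lemma EV: "E u v \<Longrightarrow> u \<in> V \<and> v \<in> V" using sg unfolding simple_graph_def by blast

lemma gdist_path: "u \<in> V \<Longrightarrow> v \<in> V \<Longrightarrow> (u, v) \<in> edge_rel E ^^ gdist E u v"
proof -
  assume "u \<in> V" "v \<in> V"
  then have "(u, v) \<in> (edge_rel E)\<^sup>*" using cg unfolding connected_graph_def by blast
  then obtain d where "(u, v) \<in> edge_rel E ^^ d" using rtrancl_power by blast
  then show ?thesis unfolding gdist_def by (rule LeastI)
qed

lemma gdist_le: "(u, v) \<in> edge_rel E ^^ d \<Longrightarrow> gdist E u v \<le> d"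
  unfolding gdist_def by (rule Least_le)

lemma gdist_refl: "gdist E u u = 0"
  using gdist_le[of u u 0] by simp

lemma gdist_0: "u \<in> V \<Longrightarrow> v \<in> V \<Longrightarrow> gdist E u v = 0 \<Longrightarrow> u = v"
  using gdist_path[of u v] by simp

lemma gdist_edge: "E u v \<Longrightarrow> gdist E u v \<le> 1"
  using gdist_le[of u v 1] by (simp add: edge_rel_def)

lemma gdist_tri: "u \<in> V \<Longrightarrow> v \<in> V \<Longrightarrow> w \<in> V \<Longrightarrow> gdist E u w \<le> gdist E u v + gdist E v w"
proof -
  assume a: "u \<in> V" "v \<in> V" "w \<in> V"
  have "(u, w) \<in> edge_rel E ^^ (gdist E u v + gdist E v w)"
    unfolding relpow_add using gdist_path a by blast
  then show ?thesis by (rule gdist_le)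
qed

lemma reach_V: "(u, w) \<in> (edge_rel E)\<^sup>* \<Longrightarrow> u \<in> V \<Longrightarrow> w \<in> V"
  by (induction rule: rtrancl_induct) (auto simp: edge_rel_def dest: EV)

lemma gdist_split:
  assumes "u \<in> V" "v \<in> V" "gdist E u v \<le> s + t"
  shows "\<exists>w\<in>V. gdist E u w \<le> s \<and> gdist E w v \<le> t"
proof (cases "gdist E u v \<le> s")
  case True
  then show ?thesis using assms gdist_refl by (intro bexI[of _ v]) auto
next
  case False
  define D where "D = gdist E u v"
  have "(u, v) \<in> edge_rel E ^^ (s + (D - s))" using False gdist_path assms unfolding D_def by simp
  then obtain w where w1: "(u, w) \<in> edge_rel E ^^ s" and w2: "(w, v) \<in> edge_rel E ^^ (D - s)"
    unfolding relpow_add by blast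
  have "w \<in> V" using reach_V[OF relpow_imp_rtrancl[OF w1] assms(1)] .
  moreover have "gdist E u w \<le> s" using gdist_le[OF w1] .
  moreover have "gdist E w v \<le> t" using gdist_le[OF w2] assms(3) unfolding D_def by simp
  ultimately show ?thesis by blast
qed

lemma parent_ex:
  assumes "r \<in> V" "v \<in> V" "gdist E r v = Suc d"
  shows "\<exists>w. E w v \<and> gdist E r w = d"
proof -
  have "(r, v) \<in> edge_rel E ^^ Suc d" using gdist_path assms by metis
  then obtain w where w1: "(r, w) \<in> edge_rel E ^^ d" and w2: "(w, v) \<in> edge_rel E"
    by (rule relpow_Suc_E)
  have E: "E w v" using w2 by (simp add: edge_rel_def)
  have "gdist E r w \<le> d" using gdist_le[OF w1] .
  moreover have "Suc d \<le> gdist E r w + 1"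
    using gdist_tri[of r w v] gdist_edge[OF E] EV[OF E] assms by simp
  ultimately show ?thesis using E by (intro exI[of _ w]) simp
qed

lemma burned_mono: "burned V F xs i \<subseteq> burned V F xs (Suc i)" by auto

lemma burn_lemma:
  assumes "set xs \<subseteq> V"
  shows "i \<le> length xs \<Longrightarrow> j < i \<Longrightarrow> v \<in> V \<Longrightarrow> gdist E (xs ! j) v \<le> k * (i - 1 - j)
         \<Longrightarrow> v \<in> burned V (graph_power V E k) xs i"
proof (induction i arbitrary: j v)
  case 0
  then show ?case by simp
next
  case (Suc i)
  have xi: "xs ! i \<in> V" using Suc.prems assms by (simp add: subset_iff)
  show ?case
  proof (cases "j = i")
    case True
    then have "v = xs ! i" using gdist_0[OF xi Suc.prems(3)] Suc.prems(4) by simp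
    then show ?thesis by simp
  next
    case False
    then have ji: "j < i" using Suc.prems by simp
    have xj: "xs ! j \<in> V" using Suc.prems assms ji by (simp add: subset_iff)
    have "gdist E (xs ! j) v \<le> k * (i - 1 - j) + k" using Suc.prems(4) ji
      by (metis Suc_diff_Suc diff_Suc_1 mult_Suc_right add.commute diff_Suc_eq_diff_pred)
    then obtain w where w: "w \<in> V" "gdist E (xs ! j) w \<le> k * (i - 1 - j)" "gdist E w v \<le> k"
      using gdist_split[OF xj Suc.prems(3)] by blast
    have wb: "w \<in> burned V (graph_power V E k) xs i"
      using Suc.IH[OF _ ji w(1) w(2)] Suc.prems(1) by simp
    show ?thesis
    proof (cases "w = v")
      case True then show ?thesis using wb by auto
    next
      case False
      then have "graph_power V E k w v" using w Suc.prems(3) unfolding graph_power_def by simp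
      then show ?thesis using wb Suc.prems(3) by auto
    qed
  qed
qed

end

fun gsum :: "nat \<Rightarrow> nat \<Rightarrow> nat" where
  "gsum k 0 = 0"
| "gsum k (Suc t) = gsum k t + k * t + 1"

lemma gsum_eq: "2 * gsum k t + k * t = k * t * t + 2 * t"
  by (induction t) (simp_all add: algebra_simps)

locale rtree = bgraph +
  fixes r :: 'a
  assumes rV: "r \<in> V"
begin

definition dd :: "'a \<Rightarrow> nat" where "dd w = gdist E r w"

definition par :: "'a \<Rightarrow> 'a" where
  "par v = (if v = r then r else SOME w. E w v \<and> dd w + 1 = dd v)"

lemma dd_r: "dd r = 0" unfolding dd_def by (rule gdist_refl)

lemma dd_0: "v \<in> V \<Longrightarrow> dd v = 0 \<Longrightarrow> v = r"
  using gdist_0[OF rV] unfolding dd_def by metis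

lemma par_props: "v \<in> V \<Longrightarrow> par v \<in> V \<and> dd (par v) = dd v - 1 \<and> gdist E (par v) v \<le> 1"
proof (cases "v = r")
  case True
  then show "v \<in> V \<Longrightarrow> ?thesis" using dd_r gdist_refl rV unfolding par_def by simp
next
  case False
  assume vV: "v \<in> V"
  then have "dd v \<noteq> 0" using dd_0 False by blast
  then obtain d where d: "dd v = Suc d" by (cases "dd v") auto
  then have "\<exists>w. E w v \<and> dd w + 1 = dd v" using parent_ex[OF rV vV] unfolding dd_def by auto
  then have s: "E (SOME w. E w v \<and> dd w + 1 = dd v) v \<and> dd (SOME w. E w v \<and> dd w + 1 = dd v) + 1 = dd v"
    by (rule someI_ex)
  have "par v = (SOME w. E w v \<and> dd w + 1 = dd v)" unfolding par_def using False by simp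
  then have pe: "E (par v) v" "dd (par v) + 1 = dd v" using s by simp_all
  have "par v \<in> V" using EV[OF pe(1)] by blast
  moreover have "dd (par v) = dd v - 1" using pe(2) by simp
  moreover have "gdist E (par v) v \<le> 1" using gdist_edge[OF pe(1)] .
  ultimately show ?thesis by blast
qed

lemma parj: "v \<in> V \<Longrightarrow> (par ^^ j) v \<in> V \<and> dd ((par ^^ j) v) = dd v - j \<and> gdist E ((par ^^ j) v) v \<le> j"
proof (induction j)
  case 0
  then show ?case using gdist_refl by simp
next
  case (Suc j)
  let ?u = "(par ^^ j) v"
  have u: "?u \<in> V" "dd ?u = dd v - j" "gdist E ?u v \<le> j" using Suc by auto
  have p: "par ?u \<in> V" "dd (par ?u) = dd ?u - 1" "gdist E (par ?u) ?u \<le> 1" using par_props[OF u(1)] by auto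
  have tr: "gdist E (par ?u) v \<le> gdist E (par ?u) ?u + gdist E ?u v" using gdist_tri[OF p(1) u(1) Suc.prems] .
  have eq: "(par ^^ Suc j) v = par ?u" by simp
  have g: "gdist E (par ?u) v \<le> Suc j" using tr p(3) u(3) by linarith
  have d: "dd (par ?u) = dd v - Suc j" using p(2) u(2) by simp
  show ?case unfolding eq using p(1) g d by blast
qed

lemma par_root: "v \<in> V \<Longrightarrow> dd v \<le> j \<Longrightarrow> (par ^^ j) v = r"
proof -
  assume a: "v \<in> V" "dd v \<le> j"
  have "(par ^^ j) v \<in> V" "dd ((par ^^ j) v) = dd v - j" using parj[OF a(1), of j] by blast+
  moreover have "dd v - j = 0" using a(2) by simp
  ultimately show ?thesis using dd_0 by metis
qed

lemma par_dist: "v \<in> V \<Longrightarrow> (par ^^ j) v = y \<Longrightarrow> gdist E y v \<le> dd v - dd y"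
proof (cases "j \<le> dd v")
  case True
  assume a: "v \<in> V" "(par ^^ j) v = y"
  have "dd y = dd v - j" "gdist E y v \<le> j" using parj[OF a(1), of j] a(2) by blast+
  then show ?thesis using True by simp
next
  case False
  assume a: "v \<in> V" "(par ^^ j) v = y"
  then have "y = r" using par_root[of v j] False by simp
  then show ?thesis using dd_r unfolding dd_def by simp
qed

lemma anc_closed: "(\<forall>v\<in>R. par v \<in> R) \<Longrightarrow> x \<in> R \<Longrightarrow> (par ^^ i) x \<in> R"
  by (induction i) auto

lemma cover:
  "R \<subseteq> V \<Longrightarrow> (\<forall>v\<in>R. par v \<in> R) \<Longrightarrow> card R \<le> gsum k t \<Longrightarrow>
   \<exists>ys. length ys = t \<and> set ys \<subseteq> V \<and> (\<forall>v\<in>R. \<exists>j<t. gdist E (ys ! j) v \<le> k * (t - 1 - j))"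
proof (induction t arbitrary: R)
  case 0
  then have "R = {}" using finV finite_subset by fastforce
  then show ?case by simp
next
  case (Suc t)
  show ?case
  proof (cases "R = {}")
    case True
    then obtain ys where "length ys = t" "set ys \<subseteq> V" using Suc.IH[of "{}"] by auto
    then show ?thesis using True rV by (intro exI[of _ "r # ys"]) auto
  next
    case False
    have finR: "finite R" using Suc.prems finV finite_subset by blast
    define M where "M = Max (dd ` R)"
    have "M \<in> dd ` R" using Max_in[of "dd ` R"] finR False unfolding M_def by auto
    then obtain x where x: "x \<in> R" "dd x = M" by blast
    have xmax: "\<forall>v\<in>R. dd v \<le> dd x" using x finR M_def by simp
    have xV: "x \<in> V" using x Suc.prems by blast
    define y where "y = (par ^^ (k * t)) x"
    define S where "S = {v\<in>R. \<exists>j. (par ^^ j) v = y}"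
    define R' where "R' = R - S"
    have R'V: "R' \<subseteq> V" using Suc.prems R'_def by blast
    have R'cl: "\<forall>v\<in>R'. par v \<in> R'"
    proof
      fix v assume v: "v \<in> R'"
      have "par v \<in> R" using v Suc.prems R'_def by blast
      moreover have "par v \<notin> S"
      proof
        assume "par v \<in> S"
        then obtain j where "(par ^^ j) (par v) = y" using S_def by blast
        then have "(par ^^ Suc j) v = y" by (simp add: funpow_swap1)
        then show False using v R'_def S_def by blast
      qed
      ultimately show "par v \<in> R'" using R'_def by blast
    qed
    have cardR': "card R' \<le> gsum k t"
    proof (cases "k * t \<le> dd x")
      case True
      define C where "C = (\<lambda>i. (par ^^ i) x) ` {..k*t}"
      have CS: "C \<subseteq> S"
      proof
        fix c assume "c \<in> C"
        then obtain i where i: "i \<le> k * t" "c = (par ^^ i) x" using C_def by blast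
        have "c \<in> R" using anc_closed Suc.prems(2) x(1) i by blast
        moreover have "(par ^^ (k * t - i)) c = y"
        proof -
          have "(par ^^ (k * t - i)) c = (par ^^ (k * t - i + i)) x" using i by (metis funpow_add comp_apply)
          then show ?thesis using i unfolding y_def by simp
        qed
        ultimately show "c \<in> S" using S_def by blast
      qed
      have "inj_on (\<lambda>i. (par ^^ i) x) {..k*t}"
      proof (rule inj_onI)
        fix i j assume "i \<in> {..k*t}" "j \<in> {..k*t}" "(par ^^ i) x = (par ^^ j) x"
        then have "dd x - i = dd x - j" using parj[OF xV, of i] parj[OF xV, of j] by simp
        then show "i = j" using True \<open>i \<in> _\<close> \<open>j \<in> _\<close> by simp
      qed
      then have "card C = card {..k*t}" unfolding C_def by (rule card_image)
      then have cC: "card C = k * t + 1" by simp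
      have "S \<subseteq> R" using S_def by blast
      have "finite S" using finR S_def by simp
      have "card C \<le> card S" using card_mono[OF \<open>finite S\<close> CS] .
      then have "card S \<ge> k * t + 1" using cC by simp
      moreover have "card R' = card R - card S" using R'_def card_Diff_subset \<open>finite S\<close> \<open>S \<subseteq> R\<close> by metis
      ultimately show ?thesis using Suc.prems(3) by simp
    next
      case False
      then have "y = r" using par_root[OF xV] y_def by simp
      have "R \<subseteq> S"
      proof
        fix v assume v: "v \<in> R"
        then have "(par ^^ dd v) v = y" using par_root[of v "dd v"] Suc.prems(1) \<open>y = r\<close> by blast
        then show "v \<in> S" using v S_def by blast
      qed
      then have "R' = {}" using R'_def by blast
      then show ?thesis by simp
    qed
    obtain ys where ys: "length ys = t" "set ys \<subseteq> V" "\<forall>v\<in>R'. \<exists>j<t. gdist E (ys ! j) v \<le> k * (t - 1 - j)"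
      using Suc.IH[OF R'V R'cl cardR'] by blast
    have yV: "y \<in> V" using parj[OF xV] y_def by simp
    have cov: "\<forall>v\<in>R. \<exists>j<Suc t. gdist E ((y # ys) ! j) v \<le> k * (Suc t - 1 - j)"
    proof
      fix v assume v: "v \<in> R"
      show "\<exists>j<Suc t. gdist E ((y # ys) ! j) v \<le> k * (Suc t - 1 - j)"
      proof (cases "v \<in> S")
        case True
        then obtain j where "(par ^^ j) v = y" using S_def by blast
        then have "gdist E y v \<le> dd v - dd y" using par_dist[of v j y] v Suc.prems(1) by blast
        moreover have "dd y = dd x - k * t" using parj[OF xV] y_def by simp
        moreover have "dd v \<le> dd x" using xmax v by blast
        ultimately have "gdist E y v \<le> k * t" by simp
        then have "0 < Suc t \<and> gdist E ((y # ys) ! 0) v \<le> k * (Suc t - 1 - 0)" by simp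
        then show ?thesis by blast
      next
        case False
        then have "v \<in> R'" using v R'_def by blast
        then obtain j where "j < t" "gdist E (ys ! j) v \<le> k * (t - 1 - j)" using ys by blast
        then have "Suc j < Suc t \<and> gdist E ((y # ys) ! Suc j) v \<le> k * (Suc t - 1 - Suc j)" by simp
        then show ?thesis by blast
      qed
    qed
    have "length (y # ys) = Suc t" using ys by simp
    moreover have "set (y # ys) \<subseteq> V" using ys yV by simp
    ultimately show ?thesis using cov by blast
  qed
qed

end

theorem mainTheorem6:
  fixes V :: "'a set" and E :: "'a \<Rightarrow> 'a \<Rightarrow> bool" and k :: nat
  assumes "simple_graph V E"
    and "connected_graph V E"
    and "2 \<le> k" and "k \<le> diam V E"
  shows "int (burning_number V (graph_power V E k))
           \<le> \<lceil>sqrt (4 * (real k - 1) / (real k)\<^sup>2 * real (card V))\<rceil>"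
proof (cases "V = {}")
  case True
  have "burns_in V (graph_power V E k) 0" unfolding burns_in_def using True by simp
  then have "burning_number V (graph_power V E k) = 0"
    unfolding burning_number_def by (metis Least_le le_zero_eq)
  then show ?thesis using True by simp
next
  case False
  interpret bgraph V E using assms(1,2) by unfold_locales
  define D where "D = {gdist E u v | u v. u \<in> V \<and> v \<in> V}"
  have "D = (\<lambda>(u, v). gdist E u v) ` (V \<times> V)" unfolding D_def by auto
  then have finD: "finite D" using finV by simp
  have "D \<noteq> {}" using False unfolding D_def by blast
  define M where "M = Max D"
  have "M \<in> D" unfolding M_def using finD \<open>D \<noteq> {}\<close> by (rule Max_in)
  then obtain u v where uv0: "u \<in> V" "v \<in> V" "gdist E u v = M"
    unfolding D_def by blast
  have "diam V E = M" unfolding diam_def M_def D_def by simp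
  then have uv: "u \<in> V" "v \<in> V" "gdist E u v = diam V E" using uv0 by simp_all
  interpret rtree V E u using uv(1) by unfold_locales
  have dv: "k \<le> dd v" using uv assms(4) unfolding dd_def by simp
  define C where "C = (\<lambda>i. (par ^^ i) v) ` {..k}"
  have "inj_on (\<lambda>i. (par ^^ i) v) {..k}"
  proof (rule inj_onI)
    fix i j assume ij: "i \<in> {..k}" "j \<in> {..k}" "(par ^^ i) v = (par ^^ j) v"
    then have "dd v - i = dd v - j" using parj[OF uv(2), of i] parj[OF uv(2), of j] by simp
    then show "i = j" using dv ij(1,2) by simp
  qed
  then have "card C = card {..k}" unfolding C_def by (rule card_image)
  then have cC: "card C = k + 1" by simp
  have "C \<subseteq> V" unfolding C_def using parj[OF uv(2)] by blast
  then have "card C \<le> card V" using finV card_mono by blast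
  then have nk: "k + 1 \<le> card V" using cC by simp
  define X where "X = sqrt (4 * (real k - 1) / (real k)\<^sup>2 * real (card V))"
  define m where "m = nat \<lceil>X\<rceil>"
  have X0: "0 \<le> X" unfolding X_def using assms(3) by simp
  have mX: "X \<le> real m" unfolding m_def using X0 by linarith
  have ar: "2 * card V + k * m \<le> k * m * m + 2 * m"
    using arith_main[OF assms(3) nk] mX unfolding X_def by blast
  have "card V \<le> gsum k m" using ar gsum_eq[of k m] by linarith
  moreover have "\<forall>w\<in>V. par w \<in> V" using par_props by blast
  ultimately obtain ys where ys: "length ys = m" "set ys \<subseteq> V"
    "\<forall>w\<in>V. \<exists>j<m. gdist E (ys ! j) w \<le> k * (m - 1 - j)"
    using cover[of V k m] by blast
  have "V \<subseteq> burned V (graph_power V E k) ys m"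
  proof
    fix w assume w: "w \<in> V"
    then obtain j where "j < m" "gdist E (ys ! j) w \<le> k * (m - 1 - j)" using ys by blast
    then show "w \<in> burned V (graph_power V E k) ys m"
      using burn_lemma[OF ys(2), of m j w k] ys(1) w by simp
  qed
  then have "burns_in V (graph_power V E k) m" unfolding burns_in_def using ys by blast
  then have "burning_number V (graph_power V E k) \<le> m"
    unfolding burning_number_def by (rule Least_le)
  then have "int (burning_number V (graph_power V E k)) \<le> int m" by simp
  also have "int m = \<lceil>X\<rceil>" unfolding m_def using X0 by simp
  finally show ?thesis unfolding X_def .
qed

end
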